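(* Let $p$ be a prime and $n\ge 2$ an integer. Then, modulo $p$, \[ \sum_{j=1}^{p-1}\zeta_{n,2}(jx,x)\equiv\begin{cases}-x^n=-\zeta_{n,1}(x) & \text{if } n=p^i \text{ for some } i\ge1,\\ 0&\text{otherwise.}\end{cases} \]
   Context: For integers $n,k\ge1$, $\zeta_{n,k}(x_1,\dots,x_k)=\phi(n,k)^{-1}\sum_{\lambda}\frac{n!}{\lambda_1!\cdots\lambda_k!}x_1^{\lambda_1}\cdots x_k^{\lambda_k}$, the sum over $k$-tuples $\lambda$ of positive integers with sum $n$, and $\phi(n,k)=\gcd_\lambda\frac{n!}{\lambda_1!\cdots\lambda_k!}$ over the same tuples; this is an integral polynomial. In particular $\zeta_{n,2}(x,y)=\phi(n,2)^{-1}\big((x+y)^n-x^n-y^n\big)$ and $\zeta_{n,1}(x)=x^n$. The sum $\sum_{j}\zeta_{n,2}(jx,x)$ is the additive half-Weil form associated to $\zeta_{n,2}$. *)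

theory Defs
  imports "HOL-Computational_Algebra.Polynomial" "HOL-Number_Theory.Cong"
begin

definition phi2 :: "nat \<Rightarrow> nat" where
  "phi2 n = Gcd {fact n div (fact l1 * fact l2) | l1 l2. l1 \<ge> 1 \<and> l2 \<ge> 1 \<and> l1 + l2 = n}"

definition zeta2 :: "nat \<Rightarrow> 'a::comm_ring_1 \<Rightarrow> 'a \<Rightarrow> 'a" where
  "zeta2 n a b = (\<Sum>l1\<in>{1..<n}.
      of_nat ((fact n div (fact l1 * fact (n - l1))) div phi2 n) * a ^ l1 * b ^ (n - l1))"

definition zeta1 :: "nat \<Rightarrow> 'a::comm_ring_1 \<Rightarrow> 'a" where
  "zeta1 n a = a ^ n"

definition poly_cong :: "int poly \<Rightarrow> int poly \<Rightarrow> int \<Rightarrow> bool" where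
  "poly_cong f g m \<longleftrightarrow> (\<forall>k. [coeff f k = coeff g k] (mod m))"

end

theory Submission
  imports Defs "HOL-Algebra.Exponent"
begin

lemma phi2_eq: "phi2 n = Gcd {n choose l | l. 1 \<le> l \<and> l < n}"
proof -
  have "{fact n div (fact l1 * fact l2) | l1 l2. l1 \<ge> 1 \<and> l2 \<ge> 1 \<and> l1 + l2 = n}
        = {n choose l | l. 1 \<le> l \<and> l < n}"
  proof (intro set_eqI iffI)
    fix x :: nat assume "x \<in> {fact n div (fact l1 * fact l2) | l1 l2. l1 \<ge> 1 \<and> l2 \<ge> 1 \<and> l1 + l2 = n}"
    then obtain l1 l2 where "x = fact n div (fact l1 * fact l2)" "l1 \<ge> 1" "l2 \<ge> 1" "l1 + l2 = n" by blast
    then show "x \<in> {n choose l | l. 1 \<le> l \<and> l < n}"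
      using binomial_fact'[of l1 n] by (auto intro!: exI[of _ l1])
  next
    fix x :: nat assume "x \<in> {n choose l | l. 1 \<le> l \<and> l < n}"
    then obtain l where "x = n choose l" "1 \<le> l" "l < n" by blast
    then show "x \<in> {fact n div (fact l1 * fact l2) | l1 l2. l1 \<ge> 1 \<and> l2 \<ge> 1 \<and> l1 + l2 = n}"
    proof -
      have "x = fact n div (fact l * fact (n-l)) \<and> l \<ge> 1 \<and> n - l \<ge> 1 \<and> l + (n-l) = n"
        using binomial_fact'[of l n] \<open>x = n choose l\<close> \<open>1 \<le> l\<close> \<open>l < n\<close> by auto
      then show ?thesis by blast
    qed
  qed
  then show ?thesis unfolding phi2_def by simp
qed

lemma phi2_dvd: "1 \<le> l \<Longrightarrow> l < n \<Longrightarrow> phi2 n dvd (n choose l)"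
  unfolding phi2_eq by (rule Gcd_dvd) blast

lemma dvd_phi2: "n \<ge> 2 \<Longrightarrow> d dvd phi2 n \<Longrightarrow> 1 \<le> l \<Longrightarrow> l < n \<Longrightarrow> d dvd (n choose l)"
  using phi2_dvd dvd_trans by blast

lemma phi2_greatest: "(\<And>l. 1 \<le> l \<Longrightarrow> l < n \<Longrightarrow> d dvd (n choose l)) \<Longrightarrow> d dvd phi2 n"
  unfolding phi2_eq by (rule Gcd_greatest) blast

lemma phi2_pos: "n \<ge> 2 \<Longrightarrow> phi2 n > 0"
proof -
  assume "n \<ge> 2"
  then have "n \<in> {n choose l | l. 1 \<le> l \<and> l < n}" by (auto intro!: exI[of _ 1])
  moreover have "n \<noteq> 0" using \<open>n \<ge> 2\<close> by simp
  ultimately have "\<not> {n choose l | l. 1 \<le> l \<and> l < n} \<subseteq> {0}" by blast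
  then have "phi2 n \<noteq> 0" unfolding phi2_eq by simp
  then show ?thesis by simp
qed

definition cc :: "nat \<Rightarrow> nat \<Rightarrow> nat" where
  "cc n l = (fact n div (fact l * fact (n - l))) div phi2 n"

lemma cc_mult: "1 \<le> l \<Longrightarrow> l < n \<Longrightarrow> int (cc n l) * int (phi2 n) = int (n choose l)"
proof -
  assume a: "1 \<le> l" "l < n"
  have "cc n l = (n choose l) div phi2 n" unfolding cc_def using binomial_fact'[of l n] a by simp
  then have "cc n l * phi2 n = n choose l" using phi2_dvd[OF a] by simp
  then show ?thesis by (metis of_nat_mult)
qed

lemma zeta2_X: "zeta2 n (smult (of_nat j) [:0,1:]) [:0,1::int:]
   = monom (\<Sum>l\<in>{1..<n}. int (cc n l) * int j ^ l) n"
  unfolding zeta2_def monom_sum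
proof (rule sum.cong[OF refl])
  fix l assume "l \<in> {1..<n}"
  then have "l + (n - l) = n" by simp
  have "(of_nat (fact n div (fact l * fact (n - l)) div phi2 n) :: int poly) * smult (int j) [:0, 1:] ^ l * [:0, 1:] ^ (n - l)
     = smult (int (cc n l) * int j ^ l) ([:0, 1:] ^ (l + (n - l)))"
    unfolding cc_def smult_power by (simp add: of_nat_poly power_add mult_ac)
  also have "\<dots> = monom (int (cc n l) * int j ^ l) n" using \<open>l + (n - l) = n\<close> by (simp add: monom_altdef)
  finally show "(of_nat (fact n div (fact l * fact (n - l)) div phi2 n) :: int poly) * smult (int j) [:0, 1:] ^ l * [:0, 1:] ^ (n - l)
     = monom (int (cc n l) * int j ^ l) n" .
qed

lemma inner_sum: "n \<ge> 2 \<Longrightarrow> (\<Sum>l\<in>{1..<n}. int (n choose l) * (j::int) ^ l) = (j+1)^n - j^n - 1"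
proof -
  assume n: "n \<ge> 2"
  have "(j+1)^n = (\<Sum>k\<le>n. of_nat (n choose k) * j^k * 1^(n-k))" by (rule binomial_ring)
  also have "{..n} = insert 0 (insert n {1..<n})" using n by auto
  also have "(\<Sum>k\<in>insert 0 (insert n {1..<n}). of_nat (n choose k) * j^k * 1^(n-k))
      = 1 + (j^n + (\<Sum>l\<in>{1..<n}. int (n choose l) * j ^ l))" using n by (simp add: sum.insert)
  finally show ?thesis by simp
qed

lemma total: "prime p \<Longrightarrow> n \<ge> 2 \<Longrightarrow>
   (\<Sum>j=1..p-1. \<Sum>l\<in>{1..<n}. int (cc n l) * int j ^ l) * int (phi2 n) = int p ^ n - int p"
proof -
  assume p: "prime p" and n: "n \<ge> 2"
  have "(\<Sum>j=1..p-1. \<Sum>l\<in>{1..<n}. int (cc n l) * int j ^ l) * int (phi2 n)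
     = (\<Sum>j=1..p-1. \<Sum>l\<in>{1..<n}. int (n choose l) * int j ^ l)"
    unfolding sum_distrib_right
    by (intro sum.cong refl) (auto simp: cc_mult[symmetric] mult_ac)
  also have "\<dots> = (\<Sum>j=1..p-1. (int (Suc j)^n - int j^n) - 1)"
    using inner_sum[OF n] by (intro sum.cong refl) (simp add: add.commute)
  also have "\<dots> = (\<Sum>j=1..p-1. (int (Suc j)^n - int j^n)) - int (p - 1)"
    by (simp add: sum_subtractf)
  also have "(\<Sum>j=1..p-1. (int (Suc j)^n - int j^n)) = int (Suc (p-1))^n - int 1 ^ n"
    by (rule sum_Suc_diff[where f = "\<lambda>j. int j ^ n"]) simp
  also have "Suc (p-1) = p" using prime_gt_0_nat[OF p] by simp
  finally show ?thesis using prime_gt_0_nat[OF p] by (simp add: of_nat_diff)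
qed

lemma phi_pow:
  assumes p: "prime p" and i: "i \<ge> 1"
  shows "phi2 (p ^ i) = p"
proof -
  define n where "n = p ^ i"
  have p1: "p > 1" using prime_gt_1_nat[OF p] .
  have n2: "n \<ge> 2" unfolding n_def using p1 i
    using power_increasing[OF i, of p] prime_ge_2_nat[OF p] by simp
  have pd: "p dvd phi2 n"
  proof (rule phi2_greatest)
    fix l assume l: "1 \<le> l" "l < n"
    have eq: "l * (n choose l) = n * ((n - 1) choose (l - 1))"
      using l by (intro times_binomial_minus1_eq) simp
    show "p dvd (n choose l)"
    proof (rule ccontr)
      assume np: "\<not> p dvd (n choose l)"
      then have "coprime (p ^ i) (n choose l)"
        using p by (simp add: prime_imp_coprime coprime_commute)
      moreover have "n dvd l * (n choose l)" unfolding eq by simp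
      then have "p ^ i dvd l * (n choose l)" unfolding n_def .
      ultimately have "p ^ i dvd l" using coprime_dvd_mult_left_iff by blast
      then have "p ^ i \<le> l" using l by (simp add: dvd_imp_le)
      then show False using l unfolding n_def by simp
    qed
  qed
  have "phi2 n dvd n" using phi2_dvd[of 1 n] n2 by simp
  then obtain k where k: "k \<le> i" "phi2 n = p ^ k" unfolding n_def using divides_primepow_nat[OF p] by blast
  have "k \<noteq> 0" by (rule notI) (use pd k p1 in simp)
  moreover have "k < 2"
  proof (rule ccontr)
    assume "\<not> k < 2"
    then have "p ^ 2 dvd phi2 n" using k by (simp add: le_imp_power_dvd)
    moreover have "phi2 n dvd (n choose p ^ (i - 1))"
    proof (rule phi2_dvd)
      show "1 \<le> p ^ (i - 1)" using p1 by simp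
      show "p ^ (i - 1) < n" unfolding n_def using p1 i by (intro power_strict_increasing) auto
    qed
    ultimately have d: "p ^ 2 dvd (n choose p ^ (i - 1))" by (rule dvd_trans)
    have "n = p ^ (i - 1) * p" unfolding n_def using i
      by (metis Suc_diff_1 less_le_trans zero_less_one power_Suc2)
    then have m: "multiplicity p (n choose p ^ (i - 1)) = multiplicity p p"
      using const_p_fac[of p p "i - 1"] p p1 by simp
    have "n choose p ^ (i - 1) \<noteq> 0"
      using \<open>n = p ^ (i - 1) * p\<close> p1 by simp
    then have "multiplicity p (n choose p ^ (i - 1)) \<ge> 2"
      using d p1 by (intro multiplicity_geI) auto
    then show False using m p by (simp add: multiplicity_prime)
  qed
  ultimately have "k = 1" by simp
  then show ?thesis using k unfolding n_def by simp
qed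

lemma phi_notpow:
  assumes p: "prime p" and n: "n \<ge> 2" and np: "\<not> (\<exists>i\<ge>1. n = p ^ i)"
  shows "\<not> p dvd phi2 n"
proof
  assume pd: "p dvd phi2 n"
  have p1: "p > 1" using prime_gt_1_nat[OF p] .
  obtain m where m: "n = p ^ multiplicity p n * m" "\<not> p dvd m"
    using multiplicity_decompose'[of n p] n p1 by auto
  define a where "a = multiplicity p n"
  have m0: "m \<noteq> 0" by (rule notI) (use m n in simp)
  have m1: "m \<noteq> 1"
  proof
    assume "m = 1"
    then have "n = p ^ a" using m a_def by simp
    moreover have "a \<noteq> 0" using \<open>n = p ^ a\<close> n by (intro notI) simp
    moreover have "\<not> (a \<ge> 1 \<and> n = p ^ a)" using np by blast
    ultimately show False by simp
  qed
  have l: "1 \<le> p ^ a" "p ^ a < n"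
  proof -
    show "1 \<le> p ^ a" using p1 by simp
    have "p ^ a * 1 < p ^ a * m" using m0 m1 p1 by (intro mult_strict_left_mono) auto
    then show "p ^ a < n" using m a_def by simp
  qed
  have "multiplicity p (n choose p ^ a) = multiplicity p m"
    using const_p_fac[of m p a] m m0 p a_def by simp
  also have "\<dots> = 0" using m by (simp add: not_dvd_imp_multiplicity_0)
  finally have "\<not> p dvd (n choose p ^ a)"
    using l p1 by (subst (asm) multiplicity_eq_zero_iff) auto
  moreover have "p dvd (n choose p ^ a)" using dvd_trans[OF pd phi2_dvd[OF l]] .
  ultimately show False by simp
qed


theorem mainTheorem9:
  fixes p n :: nat
  assumes "prime p" and "n \<ge> 2"
  shows "poly_cong (\<Sum>j=1..p-1. zeta2 n (smult (of_nat j) [:0, 1:]) [:0, 1::int:])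
           (if (\<exists>i\<ge>1. n = p ^ i) then - zeta1 n [:0, 1:] else 0) (int p)"
proof -
  note p = assms(1) and n = assms(2)
  define C where "C = (\<Sum>j=1..p-1. \<Sum>l\<in>{1..<n}. int (cc n l) * int j ^ l)"
  have L: "(\<Sum>j=1..p-1. zeta2 n (smult (of_nat j) [:0, 1:]) [:0, 1::int:]) = monom C n"
    unfolding C_def zeta2_X monom_sum ..
  have T: "C * int (phi2 n) = int p ^ n - int p" unfolding C_def by (rule total[OF p n])
  have pn: "int p ^ n - int p = int p * (int p ^ (n - 1) - 1)"
    using n by (simp add: algebra_simps power_eq_if)
  show ?thesis
  proof (cases "\<exists>i\<ge>1. n = p ^ i")
    case True
    then obtain i where i: "i \<ge> 1" "n = p ^ i" by blast
    have "phi2 n = p" using phi_pow[OF p i(1)] i(2) by simp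
    then have "C * int p = int p * (int p ^ (n - 1) - 1)" using T pn by simp
    then have Ceq: "C = int p ^ (n - 1) - 1" using prime_gt_0_nat[OF p] by (simp add: mult.commute)
    have "- zeta1 n [:0, 1:] = monom (-1::int) n" by (simp add: zeta1_def monom_altdef)
    moreover have "[C = -1] (mod int p)"
      unfolding cong_iff_dvd_diff Ceq using n by (simp add: dvd_power)
    ultimately show ?thesis using True unfolding poly_cong_def L by (simp add: coeff_monom)
  next
    case False
    have nd: "\<not> p dvd phi2 n" using phi_notpow[OF p n False] .
    have "coprime p (phi2 n)" using nd p by (simp add: prime_imp_coprime)
    then have cop: "coprime (int p) (int (phi2 n))" by simp
    have "int p dvd C * int (phi2 n)" using T pn by simp
    then have "int p dvd C" using cop coprime_dvd_mult_left_iff by blast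
    then have "[C = 0] (mod int p)" by (simp add: cong_iff_dvd_diff)
    then show ?thesis using False unfolding poly_cong_def L if_not_P[OF False] by (simp add: coeff_monom)
  qed
qed

end
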